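(* For all formulas $\phi,\psi$ of $\mathsf{JRC}$: if $\models_{\mathsf{JRC}}\phi\rightsquigarrow\psi$, then $\phi$ and $\psi$ have at least one atomic proposition in common.
   Context: Language of $\mathsf{JRC}$: countable sets $\mathsf{Var}$ (justification variables) and $\mathsf{Prop}$ (atoms). Terms $t ::= x \mid t+t$ ($x\in\mathsf{Var}$); formulas $\phi ::= p \mid {\sim}\phi \mid \phi\wedge\phi \mid \phi\to\phi \mid \phi\rightsquigarrow\phi \mid t{:}\phi$. A Routley relational model is $\mathcal M=(W,W_N,R,R_{Fm},R_{Tm},{*},\mathcal V)$ where $W$ is nonempty, $W_N\subseteq W$ nonempty (normal states); $R\subseteq W\times W\times W$ satisfies: for $w\in W_N$, $Rwvu$ iff $v=u$; $R_{Fm}$ assigns to each formula $\phi$ a relation $R_\phi\subseteq W\times W$; $R_{Tm}$ assigns to each term $t$ a relation $R_t\subseteq W\times W$; ${*}:W\to W$ with $w^{**}=w$; $\mathcal V:\mathsf{Prop}\to\mathcal P(W)$. $R_\phi(w)$, $R_t(w)$ are successor sets. Truth at every $w\in W$: $p$ iff $w\in\mathcal V(p)$; ${\sim}\phi$ iff $w^*\not\models\phi$; $\phi\wedge\psi$ iff both; $\phi\to\psi$ iff for all $v,u$ with $Rwvu$, $v\models\phi$ implies $u\models\psi$; $\phi\rightsquigarrow\psi$ iff $R_\phi(w)\subseteq[\psi]$; $t{:}\phi$ iff $R_t(w)\subseteq[\phi]$; here $[\phi]=\{w\in W:w\models\phi\}$. A $\mathsf{JRC}$-model is a Routley relational model with: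 (1) $R_\phi(w)\subseteq[\phi]$ for all $w\in W_N$ and all $\phi$; (2) for all $w\in W$, if $w\in[\phi]$ then $w\in R_\phi(w)$; (3) $R_{s+t}\subseteq R_s\cap R_t$ for all $s,t$. $\models_{\mathsf{JRC}}\phi$ iff $\phi$ is true at every normal state of every $\mathsf{JRC}$-model. *)

theory Defs
  imports Main "HOL-Library.Countable" "HOL-Library.Infinite_Typeclass"
begin

datatype 'v trm = TVar 'v | TPlus "'v trm" "'v trm"

datatype ('v, 'p) form =
    Atom 'p
  | Neg "('v, 'p) form"
  | Conj "('v, 'p) form" "('v, 'p) form"
  | Imp "('v, 'p) form" "('v, 'p) form"
  | Rsq "('v, 'p) form" "('v, 'p) form"
  | Just "'v trm" "('v, 'p) form"

primrec atoms :: "('v, 'p) form \<Rightarrow> 'p set" where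
  "atoms (Atom p) = {p}"
| "atoms (Neg a) = atoms a"
| "atoms (Conj a b) = atoms a \<union> atoms b"
| "atoms (Imp a b) = atoms a \<union> atoms b"
| "atoms (Rsq a b) = atoms a \<union> atoms b"
| "atoms (Just t a) = atoms a"

text \<open>States are elements of a type 'w; W is the set of states (a subset of the type).
  R_phi and R_t are given as successor-set functions.\<close>

record ('w, 'v, 'p) rmodel =
  W  :: "'w set"
  WN :: "'w set"
  R  :: "'w \<Rightarrow> 'w \<Rightarrow> 'w \<Rightarrow> bool"
  RF :: "('v, 'p) form \<Rightarrow> 'w \<Rightarrow> 'w set"
  RT :: "'v trm \<Rightarrow> 'w \<Rightarrow> 'w set"
  st :: "'w \<Rightarrow> 'w"
  V  :: "'p \<Rightarrow> 'w set"

definition routley_model :: "('w, 'v, 'p) rmodel \<Rightarrow> bool" where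
  "routley_model M \<longleftrightarrow>
     W M \<noteq> {} \<and> WN M \<subseteq> W M \<and> WN M \<noteq> {}
   \<and> (\<forall>w v u. R M w v u \<longrightarrow> w \<in> W M \<and> v \<in> W M \<and> u \<in> W M)
   \<and> (\<forall>w\<in>WN M. \<forall>v\<in>W M. \<forall>u\<in>W M. R M w v u \<longleftrightarrow> v = u)
   \<and> (\<forall>\<phi> w. RF M \<phi> w \<subseteq> W M \<and> (RF M \<phi> w \<noteq> {} \<longrightarrow> w \<in> W M))
   \<and> (\<forall>t w. RT M t w \<subseteq> W M \<and> (RT M t w \<noteq> {} \<longrightarrow> w \<in> W M))
   \<and> (\<forall>w\<in>W M. st M w \<in> W M \<and> st M (st M w) = w)
   \<and> (\<forall>p. V M p \<subseteq> W M)"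

primrec sat :: "('w, 'v, 'p) rmodel \<Rightarrow> 'w \<Rightarrow> ('v, 'p) form \<Rightarrow> bool" where
  "sat M w (Atom p) \<longleftrightarrow> w \<in> V M p"
| "sat M w (Neg a) \<longleftrightarrow> \<not> sat M (st M w) a"
| "sat M w (Conj a b) \<longleftrightarrow> sat M w a \<and> sat M w b"
| "sat M w (Imp a b) \<longleftrightarrow>
     (\<forall>v\<in>W M. \<forall>u\<in>W M. R M w v u \<longrightarrow> sat M v a \<longrightarrow> sat M u b)"
| "sat M w (Rsq a b) \<longleftrightarrow> RF M a w \<subseteq> {u \<in> W M. sat M u b}"
| "sat M w (Just t a) \<longleftrightarrow> RT M t w \<subseteq> {u \<in> W M. sat M u a}"

definition ext :: "('w, 'v, 'p) rmodel \<Rightarrow> ('v, 'p) form \<Rightarrow> 'w set" where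
  "ext M \<phi> = {w \<in> W M. sat M w \<phi>}"

definition jrc_model :: "('w, 'v, 'p) rmodel \<Rightarrow> bool" where
  "jrc_model M \<longleftrightarrow> routley_model M
   \<and> (\<forall>w\<in>WN M. \<forall>\<phi>. RF M \<phi> w \<subseteq> ext M \<phi>)
   \<and> (\<forall>w\<in>W M. \<forall>\<phi>. w \<in> ext M \<phi> \<longrightarrow> w \<in> RF M \<phi> w)
   \<and> (\<forall>s t w. RT M (TPlus s t) w \<subseteq> RT M s w \<inter> RT M t w)"

definition jrc_valid :: "'w itself \<Rightarrow> ('v, 'p) form \<Rightarrow> bool" where
  "jrc_valid _ \<phi> \<longleftrightarrow>
     (\<forall>M :: ('w, 'v, 'p) rmodel. jrc_model M \<longrightarrow> (\<forall>w\<in>WN M. sat M w \<phi>))"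

end

theory Submission
  imports Defs
begin

definition mkM :: "'w \<Rightarrow> 'w \<Rightarrow> 'w \<Rightarrow> 'p set \<Rightarrow> (('v,'p) form \<Rightarrow> 'w set) \<Rightarrow> ('w,'v,'p) rmodel" where
  "mkM n u u' A F = \<lparr> W = {n,u,u'}, WN = {n},
     R = (\<lambda>w v x. (w = n \<and> v = x \<and> v \<in> {n,u,u'}) \<or> (w = u \<and> v = u' \<and> x = u) \<or> (w = u' \<and> v = u \<and> x = u')),
     RF = (\<lambda>a x. if x = u then {u} else if x = u' then {u'} else if x = n then F a else {}),
     RT = (\<lambda>t x. if x = u then {u} else if x = u' then {u'} else {}),
     st = (\<lambda>x. if x = u then u' else if x = u' then u else x),
     V = (\<lambda>p. if p \<in> A then {u} else {u'}) \<rparr>"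

lemma sat_uu:
  assumes d: "n \<noteq> u" "n \<noteq> u'" "u \<noteq> u'"
  shows "x \<in> {u,u'} \<Longrightarrow> sat (mkM n u u' A F) x a = sat (mkM n u u' A G) x a"
proof (induction a arbitrary: x)
  case (Imp a b)
  then show ?case using d by (auto simp: mkM_def)
next
  case (Rsq a b)
  then show ?case using d by (auto simp: mkM_def)
next
  case (Just t a)
  then show ?case using d by (auto simp: mkM_def)
next
  case (Neg a)
  then show ?case using d by (auto simp: mkM_def)
qed (auto simp: mkM_def)

lemma sat_atoms:
  assumes d: "n \<noteq> u" "n \<noteq> u'" "u \<noteq> u'"
  shows "(atoms a \<subseteq> A \<longrightarrow> sat (mkM n u u' A F) u a \<and> \<not> sat (mkM n u u' A F) u' a)
       \<and> (atoms a \<inter> A = {} \<longrightarrow> \<not> sat (mkM n u u' A F) u a \<and> sat (mkM n u u' A F) u' a)"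
proof (induction a)
  case (Imp a b)
  then show ?case using d by (auto simp: mkM_def)
next
  case (Rsq a b)
  then show ?case using d by (auto simp: mkM_def)
next
  case (Just t a)
  then show ?case using d by (auto simp: mkM_def)
next
  case (Neg a)
  then show ?case using d by (auto simp: mkM_def)
qed (use d in \<open>auto simp: mkM_def\<close>)

primrec trueN :: "('w,'v,'p) rmodel \<Rightarrow> 'w \<Rightarrow> 'w \<Rightarrow> ('v,'p) form \<Rightarrow> ('v,'p) form \<Rightarrow> bool" where
  "trueN M0 u u' f (Atom p) = False"
| "trueN M0 u u' f (Neg a) = (\<not> trueN M0 u u' f a)"
| "trueN M0 u u' f (Conj a b) = (trueN M0 u u' f a \<and> trueN M0 u u' f b)"
| "trueN M0 u u' f (Imp a b) = ((trueN M0 u u' f a \<longrightarrow> trueN M0 u u' f b)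
     \<and> (sat M0 u a \<longrightarrow> sat M0 u b) \<and> (sat M0 u' a \<longrightarrow> sat M0 u' b))"
| "trueN M0 u u' f (Rsq a b) = ((trueN M0 u u' f a \<longrightarrow> trueN M0 u u' f b) \<and> (a = f \<longrightarrow> sat M0 u b))"
| "trueN M0 u u' f (Just t a) = True"

lemma sat_n:
  assumes d: "n \<noteq> u" "n \<noteq> u'" "u \<noteq> u'"
  and M0: "M0 = mkM n u u' A (\<lambda>_. {})"
  and F: "F = (\<lambda>a. (if trueN M0 u u' f a then {n} else {}) \<union> (if a = f then {u} else {}))"
  shows "sat (mkM n u u' A F) n a = trueN M0 u u' f a"
proof -
  have uu: "\<And>x a. x \<in> {u,u'} \<Longrightarrow> sat (mkM n u u' A F) x a = sat M0 x a"
    unfolding M0 by (rule sat_uu[OF d])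
  show ?thesis
  proof (induction a)
    case (Imp a b)
    have "sat (mkM n u u' A F) n (Imp a b) = (\<forall>v\<in>{n,u,u'}. sat (mkM n u u' A F) v a \<longrightarrow> sat (mkM n u u' A F) v b)"
      using d by (auto simp: mkM_def)
    then show ?case using Imp uu[of u] uu[of u'] by auto
  next
    case (Rsq a b)
    have "sat (mkM n u u' A F) n (Rsq a b) = ((trueN M0 u u' f a \<longrightarrow> sat (mkM n u u' A F) n b) \<and> (a = f \<longrightarrow> sat (mkM n u u' A F) u b))"
      using d by (auto simp: mkM_def F)
    then show ?case using Rsq uu[of u] by auto
  next
    case (Neg a)
    then show ?case using d by (auto simp: mkM_def)
  next
    case (Just t a)
    then show ?case using d by (auto simp: mkM_def)
  qed (use d in \<open>auto simp: mkM_def\<close>)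
qed

theorem mainTheorem16:
  fixes \<phi> \<psi> :: "('v::countable, 'p::countable) form"
  assumes "jrc_valid TYPE('w::infinite) (Rsq \<phi> \<psi>)"
  shows "atoms \<phi> \<inter> atoms \<psi> \<noteq> {}"
proof
  assume dis: "atoms \<phi> \<inter> atoms \<psi> = {}"
  have inf: "infinite (UNIV :: 'w set)" by (rule infinite_UNIV)
  obtain n :: 'w where True by simp
  obtain u :: 'w where u: "u \<notin> {n}" using ex_new_if_finite[OF inf, of "{n}"] by auto
  obtain u' :: 'w where u': "u' \<notin> {n,u}" using ex_new_if_finite[OF inf, of "{n,u}"] by auto
  have d: "n \<noteq> u" "n \<noteq> u'" "u \<noteq> u'" using u u' by auto
  define A where "A = atoms \<phi>"
  define M0 :: "('w,'v,'p) rmodel" where "M0 = mkM n u u' A (\<lambda>_. {})"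
  define F where "F = (\<lambda>a. (if trueN M0 u u' \<phi> a then {n} else {}) \<union> (if a = \<phi> then {u} else {}))"
  define M where "M = mkM n u u' A F"
  have sn: "\<And>a. sat M n a = trueN M0 u u' \<phi> a"
    unfolding M_def by (rule sat_n[OF d M0_def F_def])
  have at: "\<And>a. (atoms a \<subseteq> A \<longrightarrow> sat M u a \<and> \<not> sat M u' a)
       \<and> (atoms a \<inter> A = {} \<longrightarrow> \<not> sat M u a \<and> sat M u' a)"
    unfolding M_def by (rule sat_atoms[OF d])
  have uphi: "sat M u \<phi>" using at[of \<phi>] by (simp add: A_def)
  have upsi: "\<not> sat M u \<psi>" using at[of \<psi>] dis by (auto simp: A_def)
  have rm: "routley_model M"
    unfolding routley_model_def M_def using d by (auto simp: mkM_def F_def)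
  have jm: "jrc_model M"
    unfolding jrc_model_def
  proof (intro conjI rm)
    show "\<forall>w\<in>WN M. \<forall>a. RF M a w \<subseteq> ext M a"
      using d uphi sn by (auto simp: M_def mkM_def F_def ext_def)
    show "\<forall>w\<in>W M. \<forall>a. w \<in> ext M a \<longrightarrow> w \<in> RF M a w"
      using d sn by (auto simp: M_def mkM_def F_def ext_def)
    show "\<forall>s t w. RT M (TPlus s t) w \<subseteq> RT M s w \<inter> RT M t w"
      by (auto simp: M_def mkM_def)
  qed
  have "sat M n (Rsq \<phi> \<psi>)"
  proof -
    have "n \<in> WN M" by (simp add: M_def mkM_def)
    then show ?thesis using assms jm unfolding jrc_valid_def by blast
  qed
  moreover have "u \<in> RF M \<phi> n" using d by (simp add: M_def mkM_def F_def)
  ultimately have "sat M u \<psi>" by auto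
  with upsi show False by simp
qed

end
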